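(* Let $\mathbf{A}=(A_1,\ldots,A_n)$ be a POVM on $\mathbb{C}^2$. Then $\mathbf{A}$ is projective-simulable if and only if the pair $\{\mathbf{A},\bar{\mathbf{A}}\}$ is jointly measurable, where $\bar{\mathbf{A}}=(\bar A_1,\ldots,\bar A_n)$ with $\bar A_i=\mathrm{Tr}(A_i)\mathbb{I}-A_i$.
   Context: A POVM on $\mathbb{C}^d$ with $n$ outcomes is a tuple $\mathbf{A}=(A_1,\ldots,A_n)$ of positive semidefinite operators with $\sum_a A_a=\mathbb{I}$ (some effects may be zero); it is projective if all effects are projectors. Given a set $\mathcal{B}=\{\mathbf{B}^{(j)}\}_j$ of POVMs, a POVM $\mathbf{A}$ with $n$ outcomes is $\mathcal{B}$-simulable if there are a probability distribution $p(j)$ over (finitely many) elements of $\mathcal{B}$ and conditional probability distributions $q(i|j,i')$ (over $i\in\{1,\ldots,n\}$, for each $j$ and each outcome $i'$ of $\mathbf{B}^{(j)}$) such that $A_i=\sum_j p(j)\sum_{i'}q(i|j,i')B^{(j)}_{i'}$ for all $i$. $\mathbf{A}$ is projective-simulable if it is $\mathcal{B}$-simulable with $\mathcal{B}$ the set of all projective POVMs on $\mathbb{C}^d$. For a qubit operator $A=a\mathbb{I}+\vec v\cdot\vec\sigma$ ($\vec\sigma$ the Pauli matrices), the antipodal operator is $\bar A=a\mathbb{I}-\vec v\cdot\vec\sigma=\mathrm{Tr}(A)\mathbb{I}-A$. A pair of POVMs $\mathbf{A}$, $\mathbf{A}'$ is jointly measurable if there is a POVM $(M_{ab})$ with $\sum_b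 M_{ab}=A_a$ and $\sum_a M_{ab}=A'_b$ for all $a,b$. *)

theory Defs
  imports "HOL-Analysis.Analysis"
begin

type_synonym qop = "complex^2^2"

definition qform :: "qop \<Rightarrow> complex^2 \<Rightarrow> complex" where
  "qform A v = (\<Sum>i\<in>UNIV. \<Sum>j\<in>UNIV. cnj (v$i) * (A$i$j) * (v$j))"

text \<open>Positive semidefinite: v* A v is real and nonnegative for every v (this implies Hermitian).\<close>
definition psd :: "qop \<Rightarrow> bool" where
  "psd A \<longleftrightarrow> (\<forall>v. Im (qform A v) = 0 \<and> Re (qform A v) \<ge> 0)"

definition hermitian :: "qop \<Rightarrow> bool" where
  "hermitian A \<longleftrightarrow> (\<forall>i j. A$i$j = cnj (A$j$i))"

definition projector :: "qop \<Rightarrow> bool" where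
  "projector P \<longleftrightarrow> hermitian P \<and> P ** P = P"

definition povm :: "nat \<Rightarrow> (nat \<Rightarrow> qop) \<Rightarrow> bool" where
  "povm n A \<longleftrightarrow> (\<forall>i<n. psd (A i)) \<and> (\<Sum>i<n. A i) = mat 1"

definition projective_povm :: "nat \<Rightarrow> (nat \<Rightarrow> qop) \<Rightarrow> bool" where
  "projective_povm n B \<longleftrightarrow> povm n B \<and> (\<forall>i<n. projector (B i))"

definition antipodal :: "qop \<Rightarrow> qop" where
  "antipodal A = mat (trace A) - A"

text \<open>Projective simulability: a finite convex combination (weights p j, j < K) of
  projective POVMs B j with m j outcomes, followed by classical post-processing q j i' i.\<close>
definition projective_simulable :: "nat \<Rightarrow> (nat \<Rightarrow> qop) \<Rightarrow> bool" where
  "projective_simulable n A \<longleftrightarrow>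
    (\<exists>(K::nat) (p::nat \<Rightarrow> real) (m::nat \<Rightarrow> nat) (B::nat \<Rightarrow> nat \<Rightarrow> qop)
        (q::nat \<Rightarrow> nat \<Rightarrow> nat \<Rightarrow> real).
      (\<forall>j<K. p j \<ge> 0) \<and> (\<Sum>j<K. p j) = 1 \<and>
      (\<forall>j<K. projective_povm (m j) (B j)) \<and>
      (\<forall>j<K. \<forall>i'<m j. (\<forall>i<n. q j i' i \<ge> 0) \<and> (\<Sum>i<n. q j i' i) = 1) \<and>
      (\<forall>i<n. A i = (\<Sum>j<K. p j *\<^sub>R (\<Sum>i'<m j. q j i' i *\<^sub>R B j i'))))"

definition jointly_measurable :: "nat \<Rightarrow> (nat \<Rightarrow> qop) \<Rightarrow> nat \<Rightarrow> (nat \<Rightarrow> qop) \<Rightarrow> bool" where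
  "jointly_measurable n A n' A' \<longleftrightarrow>
    (\<exists>M::nat \<Rightarrow> nat \<Rightarrow> qop.
      (\<forall>a<n. \<forall>b<n'. psd (M a b)) \<and> (\<Sum>a<n. \<Sum>b<n'. M a b) = mat 1 \<and>
      (\<forall>a<n. (\<Sum>b<n'. M a b) = A a) \<and>
      (\<forall>b<n'. (\<Sum>a<n. M a b) = A' b))"

end

theory Submission
  imports Defs
begin

lemma mat_comp[simp]: "(mat k :: 'a::zero^'n^'n) $ i $ j = (if i = j then k else 0)"
  by (simp add: mat_def)

lemma two_ne: "(1::2) \<noteq> 2" by simp

lemma qop_eq: "(X::qop) = Y \<longleftrightarrow> X$1$1 = Y$1$1 \<and> X$1$2 = Y$1$2 \<and> X$2$1 = Y$2$1 \<and> X$2$2 = Y$2$2"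
  by (auto simp: vec_eq_iff forall_2)

lemma mult_comp: "((X::qop) ** Y) $ i $ j = X$i$1 * Y$1$j + X$i$2 * Y$2$j"
  by (simp add: matrix_matrix_mult_def sum_2)

lemma trace2: "trace (X::qop) = X$1$1 + X$2$2"
  by (simp add: trace_def sum_2)

lemma qform2: "qform A v = cnj (v$1) * A$1$1 * v$1 + cnj (v$1) * A$1$2 * v$2 + cnj (v$2) * A$2$1 * v$1 + cnj (v$2) * A$2$2 * v$2"
  by (simp add: qform_def sum_2)

lemma trace_sum: "trace (sum f S :: qop) = (\<Sum>x\<in>S. trace (f x))"
  by (simp add: trace2 sum.distrib)

lemma trace_scaleR: "trace (c *\<^sub>R (X::qop)) = c *\<^sub>R trace X"
  by (simp add: trace2 scaleR_add_right)


definition vec2 :: "complex \<Rightarrow> complex \<Rightarrow> complex^2" where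
  "vec2 a b = (\<chi> i. if i = 1 then a else b)"

lemma vec2_comp[simp]: "vec2 a b $ 1 = a" "vec2 a b $ 2 = b"
  by (simp_all add: vec2_def)

lemma psd_diag:
  assumes "psd E"
  shows "Im (E$1$1) = 0" "Re (E$1$1) \<ge> 0" "Im (E$2$2) = 0" "Re (E$2$2) \<ge> 0"
proof -
  have 1: "qform E (vec2 1 0) = E$1$1" by (simp add: qform2)
  have 2: "qform E (vec2 0 1) = E$2$2" by (simp add: qform2)
  show "Im (E$1$1) = 0" "Re (E$1$1) \<ge> 0" "Im (E$2$2) = 0" "Re (E$2$2) \<ge> 0"
    using assms 1 2 unfolding psd_def by metis+
qed

lemma psd_herm:
  assumes "psd E"
  shows "E$2$1 = cnj (E$1$2)"
proof -
  have a: "Im (qform E (vec2 1 1)) = 0" "Im (qform E (vec2 1 \<i>)) = 0"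
    using assms unfolding psd_def by auto
  have d: "Im (E$1$1) = 0" "Im (E$2$2) = 0" using psd_diag[OF assms] by auto
  from a d show ?thesis
    by (simp add: qform2 complex_eq_iff)
qed

lemma psd_hermitian: "psd E \<Longrightarrow> hermitian E"
  unfolding hermitian_def forall_2
  using psd_herm[of E] psd_diag[of E] by (auto simp: complex_eq_iff)

lemma psd_det:
  assumes "psd E"
  shows "(cmod (E$1$2))^2 \<le> Re (E$1$1) * Re (E$2$2)"
proof -
  let ?a = "E$1$1" and ?b = "E$1$2" and ?d = "E$2$2"
  have h: "E$2$1 = cnj ?b" by (rule psd_herm[OF assms])
  have d: "Im ?a = 0" "Re ?a \<ge> 0" "Im ?d = 0" "Re ?d \<ge> 0" using psd_diag[OF assms] by auto
  have nn: "\<And>v. Re (qform E v) \<ge> 0" using assms unfolding psd_def by auto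
  have n2: "(cmod ?b)^2 = (Re ?b)^2 + (Im ?b)^2" by (simp add: cmod_power2)
  have q1: "Re (qform E (vec2 (- ?b) (complex_of_real (Re ?a)))) = Re ?a * (Re ?a * Re ?d - (cmod ?b)^2)"
    using d h n2 by (simp add: qform2 algebra_simps power2_eq_square)
  have q2: "Re (qform E (vec2 (complex_of_real (Re ?d)) (- cnj ?b))) = Re ?d * (Re ?a * Re ?d - (cmod ?b)^2)"
    using d h n2 by (simp add: qform2 algebra_simps power2_eq_square)
  have q3: "Re (qform E (vec2 1 (- cnj ?b))) = Re ?a - 2 * (cmod ?b)^2 + Re ?d * (cmod ?b)^2"
    using d h n2 by (simp add: qform2 algebra_simps power2_eq_square)
  have "0 \<le> (Re ?a + Re ?d) * (Re ?a * Re ?d - (cmod ?b)^2)"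
    using nn[of "vec2 (- ?b) (complex_of_real (Re ?a))"] nn[of "vec2 (complex_of_real (Re ?d)) (- cnj ?b)"] q1 q2
    by (simp add: algebra_simps)
  moreover have "(cmod ?b)^2 \<le> 0" if z: "Re ?a + Re ?d = 0"
  proof -
    have "Re ?a = 0" "Re ?d = 0" using z d by linarith+
    then show ?thesis using nn[of "vec2 1 (- cnj ?b)"] q3 by simp
  qed
  ultimately show ?thesis using d
    by (smt (verit) mult_le_0_iff zero_le_mult_iff)
qed


lemma qform_scaleR: "qform (c *\<^sub>R X) v = complex_of_real c * qform X v"
  unfolding qform2 vector_scaleR_component by (simp add: scaleR_conv_of_real algebra_simps)

lemma qform_add: "qform (X + Y) v = qform X v + qform Y v"
  by (simp add: qform2 algebra_simps)

lemma psd_zero[simp]: "psd 0"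
  by (simp add: psd_def qform2)

lemma psd_scale: "psd X \<Longrightarrow> c \<ge> 0 \<Longrightarrow> psd (c *\<^sub>R X)"
  by (simp add: psd_def qform_scaleR)

lemma psd_add: "psd X \<Longrightarrow> psd Y \<Longrightarrow> psd (X + Y)"
  by (simp add: psd_def qform_add)

lemma psd_sum: "finite S \<Longrightarrow> (\<And>x. x \<in> S \<Longrightarrow> psd (f x)) \<Longrightarrow> psd (sum f S)"
  by (induction S rule: finite_induct) (auto intro: psd_add)

lemma herm_entries:
  assumes "hermitian P"
  shows "P$1$1 = complex_of_real (Re (P$1$1))" "P$2$2 = complex_of_real (Re (P$2$2))" "P$2$1 = cnj (P$1$2)"
proof -
  have "P$1$1 = cnj (P$1$1)" "P$2$2 = cnj (P$2$2)" "P$2$1 = cnj (P$1$2)"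
    using assms unfolding hermitian_def by metis+
  then show "P$1$1 = complex_of_real (Re (P$1$1))" "P$2$2 = complex_of_real (Re (P$2$2))" "P$2$1 = cnj (P$1$2)"
    by (auto simp: complex_eq_iff)
qed

lemma cnj_sq: "cnj z * z = complex_of_real ((cmod z)^2)"
  by (metis complex_norm_square mult.commute)

lemma proj_psd:
  assumes h: "hermitian P" and i: "P ** P = P"
  shows "psd P"
  unfolding psd_def
proof
  fix v :: "complex^2"
  let ?w1 = "P$1$1 * v$1 + P$1$2 * v$2" and ?w2 = "P$2$1 * v$1 + P$2$2 * v$2"
  obtain a d b where e: "P$1$1 = complex_of_real a" "P$2$2 = complex_of_real d" "P$2$1 = cnj b" "P$1$2 = b"
    using herm_entries[OF h] by metis
  have "qform P v = qform (P ** P) v" using i by simp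
  also have "\<dots> = cnj ?w1 * ?w1 + cnj ?w2 * ?w2"
    unfolding qform2 mult_comp e by (simp add: algebra_simps)
  finally have q: "qform P v = complex_of_real ((cmod ?w1)^2 + (cmod ?w2)^2)"
    by (simp only: cnj_sq of_real_add)
  show "Im (qform P v) = 0 \<and> 0 \<le> Re (qform P v)" unfolding q by simp
qed

lemma proj_trace:
  assumes "projector P"
  shows "Im (trace P) = 0 \<and> (P = 0 \<or> Re (trace P) \<ge> 1)"
proof -
  have h: "hermitian P" and i: "P ** P = P" using assms unfolding projector_def by auto
  obtain a d b where e: "P$1$1 = complex_of_real a" "P$2$2 = complex_of_real d" "P$2$1 = cnj b" "P$1$2 = b"
    using herm_entries[OF h] by metis
  have n: "cnj b * b = complex_of_real ((cmod b)^2)" by (rule cnj_sq)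
  have i11: "(P ** P)$1$1 = P$1$1" and i12: "(P**P)$1$2 = P$1$2" and i22: "(P**P)$2$2 = P$2$2"
    using i by auto
  have r11: "a*a + (cmod b)^2 = a" using i11 unfolding mult_comp e
    by (metis n mult.commute of_real_add of_real_eq_iff of_real_mult)
  have r22: "(cmod b)^2 + d*d = d" using i22 unfolding mult_comp e
    by (metis n of_real_add of_real_eq_iff of_real_mult)
  have r12: "b * complex_of_real (a + d - 1) = 0" using i12 unfolding mult_comp e
    by (simp add: algebra_simps)
  have tr: "trace P = complex_of_real (a + d)" by (simp add: trace2 e)
  show ?thesis
  proof (cases "b = 0")
    case False
    then have "complex_of_real (a + d - 1) = 0" using r12 by simp
    then have "a + d = 1" by (simp only: of_real_eq_0_iff)
    then show ?thesis using tr by simp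
  next
    case True
    then have "a*a = a" "d*d = d" using r11 r22 by simp_all
    then have "a = 0 \<or> a = 1" "d = 0 \<or> d = 1" by (metis mult_cancel_right2 mult_zero_left)+
    moreover have "a = 0 \<Longrightarrow> d = 0 \<Longrightarrow> P = 0"
      using True e by (simp add: qop_eq)
    ultimately show ?thesis using tr by auto
  qed
qed


definition mk2 :: "complex \<Rightarrow> complex \<Rightarrow> complex \<Rightarrow> complex \<Rightarrow> qop" where
  "mk2 w x y z = (\<chi> i j. if i = 1 then (if j = 1 then w else x) else (if j = 1 then y else z))"

lemma mk2_comp[simp]: "mk2 w x y z $ 1 $ 1 = w" "mk2 w x y z $ 1 $ 2 = x"
  "mk2 w x y z $ 2 $ 1 = y" "mk2 w x y z $ 2 $ 2 = z"
  by (simp_all add: mk2_def)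

lemma proj_param:
  assumes "p^2 + (cmod c)^2 = 1/4"
  shows "projector (mk2 (complex_of_real (1/2 + p)) c (cnj c) (complex_of_real (1/2 - p)))"
proof -
  have n: "c * cnj c = complex_of_real (1/4 - p^2)" using assms by (metis cnj_sq mult.commute add_diff_cancel_left')
  have n': "cnj c * c = complex_of_real (1/4 - p^2)" using n by (simp add: mult.commute)
  have q: "cmod c * cmod c = 1/4 - p*p" using assms by (simp add: power2_eq_square)
  have o: "c * complex_of_real (1 / 2 - p) + c * complex_of_real (p + 1 / 2) = c" for c
  proof -
    have "c * complex_of_real (1 / 2 - p) + c * complex_of_real (p + 1 / 2) = c * complex_of_real ((1 / 2 - p) + (p + 1/2))"
      by (simp only: distrib_left of_real_add)
    then show ?thesis by simp
  qed
  show ?thesis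
    unfolding projector_def hermitian_def forall_2 qop_eq mult_comp
    by (simp add: n n' algebra_simps power2_eq_square of_real_diff[symmetric] of_real_mult[symmetric] of_real_add[symmetric]
        del: of_real_diff of_real_mult of_real_add) (auto simp: algebra_simps)
qed


lemma one_minus_mk2: "mat 1 - mk2 (complex_of_real (1/2 + p)) c (cnj c) (complex_of_real (1/2 - p))
   = mk2 (complex_of_real (1/2 + (-p))) (-c) (cnj (-c)) (complex_of_real (1/2 - (-p)))"
  by (simp add: qop_eq)

lemma psd_decomp:
  assumes "psd E"
  obtains P D where "projector P" "projector (mat 1 - P)" "0 \<le> D" "D \<le> Re (trace E)"
   "E = ((Re (trace E) + D)/2) *\<^sub>R P + ((Re (trace E) - D)/2) *\<^sub>R (mat 1 - P)"
   "antipodal E = ((Re (trace E) - D)/2) *\<^sub>R P + ((Re (trace E) + D)/2) *\<^sub>R (mat 1 - P)"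
proof -
  define a where "a = Re (E$1$1)"
  define d where "d = Re (E$2$2)"
  define b where "b = E$1$2"
  have ent: "E$1$1 = complex_of_real a" "E$2$2 = complex_of_real d" "E$2$1 = cnj b" "E$1$2 = b"
    using herm_entries[OF psd_hermitian[OF assms]] unfolding a_def d_def b_def by auto
  have nn: "a \<ge> 0" "d \<ge> 0" using psd_diag[OF assms] unfolding a_def d_def by auto
  have det: "(cmod b)^2 \<le> a * d" using psd_det[OF assms] unfolding a_def d_def b_def .
  have tr: "Re (trace E) = a + d" "trace E = complex_of_real (a + d)" by (simp_all add: trace2 ent)
  define D where "D = sqrt ((a - d)^2 + 4 * (cmod b)^2)"
  have D0: "D \<ge> 0" unfolding D_def by simp
  have D2: "D^2 = (a - d)^2 + 4 * (cmod b)^2" unfolding D_def by simp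
  have Dt: "D \<le> a + d"
  proof -
    have "(a - d)^2 + 4 * (cmod b)^2 \<le> (a + d)^2" using det by (simp add: power2_eq_square algebra_simps)
    then have "D \<le> sqrt ((a+d)^2)" unfolding D_def using real_sqrt_le_mono by blast
    then show ?thesis using nn by simp
  qed
  define p where "p = (if D = 0 then 1/2 else (a - d) / (2 * D))"
  define c where "c = (if D = 0 then 0 else b / complex_of_real D)"
  define P where "P = mk2 (complex_of_real (1/2 + p)) c (cnj c) (complex_of_real (1/2 - p))"
  have pc: "p^2 + (cmod c)^2 = 1/4"
  proof (cases "D = 0")
    case True then show ?thesis unfolding p_def c_def by (simp add: power2_eq_square)
  next
    case False
    have "p^2 + (cmod c)^2 = ((a - d)^2 + 4 * (cmod b)^2) / (4 * D^2)"
      unfolding p_def c_def using False D0 by (simp add: norm_divide power_divide field_simps)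
    also have "\<dots> = 1/4" using False by (simp add: D2[symmetric])
    finally show ?thesis .
  qed
  have P1: "projector P" unfolding P_def by (rule proj_param[OF pc])
  have P2: "projector (mat 1 - P)" unfolding P_def one_minus_mk2 by (rule proj_param) (use pc in simp)
  have key: "D * p = (a - d) / 2 \<and> complex_of_real D * c = b"
  proof (cases "D = 0")
    case True
    then have "(a - d)^2 + 4 * (cmod b)^2 = 0" using D2 by simp
    then have "a = d" "b = 0" by (auto simp: add_nonneg_eq_0_iff)
    then show ?thesis using True by simp
  next
    case False then show ?thesis unfolding p_def c_def by simp
  qed
  have e1: "E = ((Re (trace E) + D)/2) *\<^sub>R P + ((Re (trace E) - D)/2) *\<^sub>R (mat 1 - P)"
    unfolding qop_eq tr(1) using key
    by (auto simp: ent P_def complex_eq_iff algebra_simps) (simp_all add: field_simps)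
  have e2: "antipodal E = ((Re (trace E) - D)/2) *\<^sub>R P + ((Re (trace E) + D)/2) *\<^sub>R (mat 1 - P)"
    unfolding qop_eq tr(1) antipodal_def tr(2) using key
    by (auto simp: ent P_def complex_eq_iff algebra_simps) (simp_all add: field_simps)
  show ?thesis using that[OF P1 P2 D0 _ e1 e2] Dt tr by simp
qed


lemma antipodal_add: "antipodal (X + Y) = antipodal X + antipodal Y"
  by (simp add: antipodal_def qop_eq trace2)

lemma antipodal_scaleR: "antipodal (c *\<^sub>R X) = c *\<^sub>R antipodal X"
  by (simp add: antipodal_def qop_eq trace2 algebra_simps)

lemma antipodal_zero[simp]: "antipodal 0 = 0"
  by (simp add: antipodal_def qop_eq trace2)

lemma antipodal_sum: "antipodal (sum f S) = (\<Sum>x\<in>S. antipodal (f x))"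
proof (cases "finite S")
  case True then show ?thesis by (induction S rule: finite_induct) (simp_all add: antipodal_add)
qed simp

lemma antipodal_antipodal[simp]: "antipodal (antipodal X) = X"
  by (simp add: antipodal_def qop_eq trace2)

lemma antipodal_real: "Im (trace X) = 0 \<Longrightarrow> antipodal X = Re (trace X) *\<^sub>R mat 1 - X"
  by (simp add: antipodal_def qop_eq trace2 complex_eq_iff)

lemma trace_mat1: "trace (mat 1 :: qop) = 2"
  by (simp add: trace2)

lemma sum_pairs:
  fixes f :: "nat \<Rightarrow> nat \<Rightarrow> 'a::comm_monoid_add"
  shows "(\<Sum>j<n*n. f (j div n) (j mod n)) = (\<Sum>x<n. \<Sum>y<n. f x y)"
proof -
  have b: "bij_betw (\<lambda>(x,y). x*n+y) ({..<n} \<times> {..<n}) {..<n*n}"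
  proof (rule bij_betw_imageI)
    show "inj_on (\<lambda>(x,y). x*n+y) ({..<n} \<times> {..<n})"
    proof (rule inj_onI, clarsimp)
      fix x y x' y' assume "x < n" "y < n" "x' < n" "y' < n" "x*n+y = x'*n+y'"
      then have "(x*n+y) div n = (x'*n+y') div n" "(x*n+y) mod n = (x'*n+y') mod n" by simp_all
      then show "x = x' \<and> y = y'" using \<open>y < n\<close> \<open>y' < n\<close> by simp
    qed
    show "(\<lambda>(x,y). x*n+y) ` ({..<n} \<times> {..<n}) = {..<n*n}"
    proof
      show "(\<lambda>(x,y). x*n+y) ` ({..<n} \<times> {..<n}) \<subseteq> {..<n*n}"
      proof clarsimp
        fix x y assume "x < n" "y < n"
        then have "x*n + y < x*n + n" by simp
        also have "\<dots> = (x+1)*n" by simp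
        also have "\<dots> \<le> n*n" using \<open>x < n\<close> by (metis Suc_eq_plus1 Suc_leI mult_le_mono1)
        finally show "x*n + y < n*n" .
      qed
      show "{..<n*n} \<subseteq> (\<lambda>(x,y). x*n+y) ` ({..<n} \<times> {..<n})"
      proof
        fix j assume j: "j \<in> {..<n*n}"
        then have n0: "n > 0" by (cases n) auto
        have "j div n < n" using j n0 by (simp add: div_less_iff_less_mult mult.commute)
        moreover have "j mod n < n" using n0 by simp
        moreover have "j = (j div n)*n + j mod n" by simp
        ultimately have "(j div n, j mod n) \<in> {..<n} \<times> {..<n}" "j = (\<lambda>(x,y). x*n+y) (j div n, j mod n)" by simp_all
        then show "j \<in> (\<lambda>(x,y). x*n+y) ` ({..<n} \<times> {..<n})" by (rule rev_image_eqI)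
      qed
    qed
  qed
  have "(\<Sum>j<n*n. f (j div n) (j mod n)) = (\<Sum>(x,y)\<in>{..<n} \<times> {..<n}. f ((x*n+y) div n) ((x*n+y) mod n))"
    using sum.reindex_bij_betw[OF b, of "\<lambda>j. f (j div n) (j mod n)"] by (simp add: case_prod_unfold)
  also have "\<dots> = (\<Sum>(x,y)\<in>{..<n} \<times> {..<n}. f x y)"
    by (rule sum.cong) auto
  also have "\<dots> = (\<Sum>x<n. \<Sum>y<n. f x y)" by (rule sum.cartesian_product[symmetric])
  finally show ?thesis .
qed


lemma swap_k:
  fixes N :: "nat \<Rightarrow> nat \<Rightarrow> nat \<Rightarrow> qop"
  shows "(\<Sum>k\<in>S. \<Sum>j\<in>T. g j *\<^sub>R (\<Sum>a\<in>U j. \<Sum>b\<in>U j. (x j a k * y j b k) *\<^sub>R N j a b))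
   = (\<Sum>j\<in>T. g j *\<^sub>R (\<Sum>a\<in>U j. \<Sum>b\<in>U j. (\<Sum>k\<in>S. x j a k * y j b k) *\<^sub>R N j a b))"
proof -
  have "(\<Sum>k\<in>S. \<Sum>j\<in>T. g j *\<^sub>R (\<Sum>a\<in>U j. \<Sum>b\<in>U j. (x j a k * y j b k) *\<^sub>R N j a b))
     = (\<Sum>j\<in>T. \<Sum>k\<in>S. g j *\<^sub>R (\<Sum>a\<in>U j. \<Sum>b\<in>U j. (x j a k * y j b k) *\<^sub>R N j a b))"
    by (rule sum.swap)
  also have "\<dots> = (\<Sum>j\<in>T. g j *\<^sub>R (\<Sum>k\<in>S. \<Sum>a\<in>U j. \<Sum>b\<in>U j. (x j a k * y j b k) *\<^sub>R N j a b))"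
    by (simp add: scaleR_sum_right)
  also have "\<dots> = (\<Sum>j\<in>T. g j *\<^sub>R (\<Sum>a\<in>U j. \<Sum>b\<in>U j. \<Sum>k\<in>S. (x j a k * y j b k) *\<^sub>R N j a b))"
  proof (rule sum.cong[OF refl])
    fix j
    have "(\<Sum>k\<in>S. \<Sum>a\<in>U j. \<Sum>b\<in>U j. (x j a k * y j b k) *\<^sub>R N j a b) = (\<Sum>a\<in>U j. \<Sum>k\<in>S. \<Sum>b\<in>U j. (x j a k * y j b k) *\<^sub>R N j a b)"
      by (rule sum.swap)
    also have "\<dots> = (\<Sum>a\<in>U j. \<Sum>b\<in>U j. \<Sum>k\<in>S. (x j a k * y j b k) *\<^sub>R N j a b)"
      by (rule sum.cong[OF refl], rule sum.swap)
    finally show "g j *\<^sub>R (\<Sum>k\<in>S. \<Sum>a\<in>U j. \<Sum>b\<in>U j. (x j a k * y j b k) *\<^sub>R N j a b) = g j *\<^sub>R (\<Sum>a\<in>U j. \<Sum>b\<in>U j. \<Sum>k\<in>S. (x j a k * y j b k) *\<^sub>R N j a b)"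
      by simp
  qed
  also have "\<dots> = (\<Sum>j\<in>T. g j *\<^sub>R (\<Sum>a\<in>U j. \<Sum>b\<in>U j. (\<Sum>k\<in>S. x j a k * y j b k) *\<^sub>R N j a b))"
    by (simp add: scaleR_sum_left)
  finally show ?thesis .
qed

lemma proj_joint:
  assumes "projective_povm m B"
  defines "N \<equiv> \<lambda>a b. (Re (trace (B b)) - (if a = b then 1 else 0)) *\<^sub>R B a"
  shows "\<forall>a<m. \<forall>b<m. psd (N a b)" "\<forall>a<m. (\<Sum>b<m. N a b) = B a" "\<forall>b<m. (\<Sum>a<m. N a b) = antipodal (B b)"
proof -
  have ps: "psd (B a)" if "a < m" for a using assms that unfolding projective_povm_def povm_def by auto
  have pr: "projector (B a)" if "a < m" for a using assms that unfolding projective_povm_def by auto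
  have s1: "(\<Sum>a<m. B a) = mat 1" using assms unfolding projective_povm_def povm_def by auto
  have trnn: "Re (trace (B a)) \<ge> 0" if "a < m" for a
    using psd_diag[OF ps[OF that]] by (simp add: trace2)
  show "\<forall>a<m. \<forall>b<m. psd (N a b)"
  proof (intro allI impI)
    fix a b assume a: "a < m" and b: "b < m"
    show "psd (N a b)"
    proof (cases "a = b")
      case True
      then show ?thesis using proj_trace[OF pr[OF a]] ps[OF a] unfolding N_def
        by (auto intro: psd_scale)
    next
      case False
      then show ?thesis using trnn[OF b] ps[OF a] unfolding N_def by (auto intro: psd_scale)
    qed
  qed
  have trs: "(\<Sum>b<m. Re (trace (B b))) = 2"
  proof -
    have "(\<Sum>b<m. Re (trace (B b))) = Re (trace (\<Sum>b<m. B b))" by (simp add: trace_sum)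
    then show ?thesis using s1 trace_mat1 by simp
  qed
  show "\<forall>a<m. (\<Sum>b<m. N a b) = B a"
  proof (intro allI impI)
    fix a assume a: "a < m"
    have "(\<Sum>b<m. N a b) = (\<Sum>b<m. Re (trace (B b)) - (if a = b then 1 else 0)) *\<^sub>R B a"
      unfolding N_def by (simp add: scaleR_sum_left)
    also have "\<dots> = B a" using a by (simp add: sum_subtractf trs)
    finally show "(\<Sum>b<m. N a b) = B a" .
  qed
  show "\<forall>b<m. (\<Sum>a<m. N a b) = antipodal (B b)"
  proof (intro allI impI)
    fix b assume b: "b < m"
    have "(\<Sum>a<m. N a b) = (\<Sum>a<m. Re (trace (B b)) *\<^sub>R B a - (if a = b then B a else 0))"
      unfolding N_def by (rule sum.cong) (auto simp: scaleR_diff_left)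
    also have "\<dots> = Re (trace (B b)) *\<^sub>R mat 1 - B b"
      using b by (simp add: sum_subtractf scaleR_sum_right[symmetric] s1)
    also have "\<dots> = antipodal (B b)" using antipodal_real proj_trace[OF pr[OF b]] by simp
    finally show "(\<Sum>a<m. N a b) = antipodal (B b)" .
  qed
qed


lemma fwd:
  assumes A: "povm n A" and S: "projective_simulable n A"
  shows "jointly_measurable n A n (\<lambda>i. antipodal (A i))"
proof -
  obtain K :: nat and p :: "nat \<Rightarrow> real" and m :: "nat \<Rightarrow> nat" and B :: "nat \<Rightarrow> nat \<Rightarrow> qop"
    and q :: "nat \<Rightarrow> nat \<Rightarrow> nat \<Rightarrow> real" where p0: "\<forall>j<K. p j \<ge> 0" and p1: "(\<Sum>j<K. p j) = 1"
    and Bp: "\<forall>j<K. projective_povm (m j) (B j)"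
    and q: "\<forall>j<K. \<forall>i'<m j. (\<forall>i<n. q j i' i \<ge> 0) \<and> (\<Sum>i<n. q j i' i) = 1"
    and Ai: "\<forall>i<n. A i = (\<Sum>j<K. p j *\<^sub>R (\<Sum>i'<m j. q j i' i *\<^sub>R B j i'))"
    using S unfolding projective_simulable_def by blast
  define N where "N = (\<lambda>j a b. (Re (trace (B j b)) - (if a = b then 1 else 0)) *\<^sub>R B j a)"
  have NJ: "\<forall>a<m j. \<forall>b<m j. psd (N j a b)" "\<forall>a<m j. (\<Sum>b<m j. N j a b) = B j a"
     "\<forall>b<m j. (\<Sum>a<m j. N j a b) = antipodal (B j b)" if "j < K" for j
    using proj_joint[OF Bp[rule_format, OF that]] unfolding N_def by auto
  define M where "M = (\<lambda>i k. \<Sum>j<K. p j *\<^sub>R (\<Sum>a<m j. \<Sum>b<m j. (q j a i * q j b k) *\<^sub>R N j a b))"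
  have psdM: "psd (M i k)" if "i < n" "k < n" for i k
    unfolding M_def
    using p0 q NJ that by (auto intro!: psd_sum psd_scale)
  have m1: "(\<Sum>k<n. M i k) = A i" if i: "i < n" for i
  proof -
    have "(\<Sum>k<n. M i k) = (\<Sum>j<K. p j *\<^sub>R (\<Sum>a<m j. \<Sum>b<m j. (\<Sum>k<n. q j a i * q j b k) *\<^sub>R N j a b))"
      unfolding M_def by (rule swap_k)
    also have "\<dots> = (\<Sum>j<K. p j *\<^sub>R (\<Sum>a<m j. q j a i *\<^sub>R B j a))"
    proof (rule sum.cong[OF refl])
      fix j assume j: "j \<in> {..<K}"
      have "(\<Sum>a<m j. \<Sum>b<m j. (\<Sum>k<n. q j a i * q j b k) *\<^sub>R N j a b) = (\<Sum>a<m j. q j a i *\<^sub>R B j a)"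
      proof (rule sum.cong[OF refl])
        fix a assume a: "a \<in> {..<m j}"
        have "(\<Sum>b<m j. (\<Sum>k<n. q j a i * q j b k) *\<^sub>R N j a b) = (\<Sum>b<m j. q j a i *\<^sub>R N j a b)"
          using q j by (intro sum.cong[OF refl]) (simp add: sum_distrib_left[symmetric])
        also have "\<dots> = q j a i *\<^sub>R B j a" using NJ(2)[of j] j a by (simp add: scaleR_sum_right[symmetric])
        finally show "(\<Sum>b<m j. (\<Sum>k<n. q j a i * q j b k) *\<^sub>R N j a b) = q j a i *\<^sub>R B j a" .
      qed
      then show "p j *\<^sub>R (\<Sum>a<m j. \<Sum>b<m j. (\<Sum>k<n. q j a i * q j b k) *\<^sub>R N j a b) = p j *\<^sub>R (\<Sum>a<m j. q j a i *\<^sub>R B j a)"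
        by simp
    qed
    also have "\<dots> = A i" using Ai i by simp
    finally show ?thesis .
  qed
  have m2: "(\<Sum>i<n. M i k) = antipodal (A k)" if k: "k < n" for k
  proof -
    have "(\<Sum>i<n. M i k) = (\<Sum>j<K. p j *\<^sub>R (\<Sum>a<m j. \<Sum>b<m j. (\<Sum>i<n. q j a i * q j b k) *\<^sub>R N j a b))"
      unfolding M_def by (rule swap_k[where x = "\<lambda>j a i. q j a i" and y = "\<lambda>j b i. q j b k"])
    also have "\<dots> = (\<Sum>j<K. p j *\<^sub>R (\<Sum>b<m j. q j b k *\<^sub>R antipodal (B j b)))"
    proof (rule sum.cong[OF refl])
      fix j assume j: "j \<in> {..<K}"
      have "(\<Sum>a<m j. \<Sum>b<m j. (\<Sum>i<n. q j a i * q j b k) *\<^sub>R N j a b) = (\<Sum>a<m j. \<Sum>b<m j. q j b k *\<^sub>R N j a b)"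
        using q j by (intro sum.cong[OF refl]) (simp add: sum_distrib_right[symmetric])
      also have "\<dots> = (\<Sum>b<m j. \<Sum>a<m j. q j b k *\<^sub>R N j a b)" by (rule sum.swap)
      also have "\<dots> = (\<Sum>b<m j. q j b k *\<^sub>R antipodal (B j b))"
        using NJ(3)[of j] j by (intro sum.cong[OF refl]) (simp add: scaleR_sum_right[symmetric])
      finally show "p j *\<^sub>R (\<Sum>a<m j. \<Sum>b<m j. (\<Sum>i<n. q j a i * q j b k) *\<^sub>R N j a b) = p j *\<^sub>R (\<Sum>b<m j. q j b k *\<^sub>R antipodal (B j b))"
        by simp
    qed
    also have "\<dots> = antipodal (A k)" using Ai k by (simp add: antipodal_sum antipodal_scaleR)
    finally show ?thesis .
  qed
  have tot: "(\<Sum>a<n. \<Sum>b<n. M a b) = mat 1"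
    using m1 A unfolding povm_def by simp
  show ?thesis unfolding jointly_measurable_def
    using psdM tot m1 m2 by blast
qed


definition dec :: "qop \<Rightarrow> qop \<Rightarrow> real \<Rightarrow> bool" where
  "dec E P D \<longleftrightarrow> projector P \<and> projector (mat 1 - P) \<and> 0 \<le> D \<and> D \<le> Re (trace E) \<and>
     E = ((Re (trace E) + D)/2) *\<^sub>R P + ((Re (trace E) - D)/2) *\<^sub>R (mat 1 - P) \<and>
     antipodal E = ((Re (trace E) - D)/2) *\<^sub>R P + ((Re (trace E) + D)/2) *\<^sub>R (mat 1 - P)"

definition sel :: "qop \<Rightarrow> qop \<times> real" where
  "sel E = (SOME PD. dec E (fst PD) (snd PD))"

lemma sel_dec: "psd E \<Longrightarrow> dec E (fst (sel E)) (snd (sel E))"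
proof -
  assume "psd E"
  then obtain P D where "dec E P D" using psd_decomp[of E] unfolding dec_def by metis
  then have "\<exists>PD. dec E (fst PD) (snd PD)" by (metis fst_conv snd_conv)
  then show ?thesis unfolding sel_def by (rule someI_ex)
qed

lemma comb:
  fixes P Q E E' :: qop
  assumes "t * s = D" "E = ((t+D)/2) *\<^sub>R P + ((t-D)/2) *\<^sub>R Q" "E' = ((t-D)/2) *\<^sub>R P + ((t+D)/2) *\<^sub>R Q"
  shows "(t/2) *\<^sub>R ((u * ((1+s)/2) + v * ((1-s)/2)) *\<^sub>R P + (u * ((1-s)/2) + v * ((1+s)/2)) *\<^sub>R Q) = (u/2) *\<^sub>R E + (v/2) *\<^sub>R E'"
proof -
  have l: "(t/2) *\<^sub>R ((u * ((1+s)/2) + v * ((1-s)/2)) *\<^sub>R P + (u * ((1-s)/2) + v * ((1+s)/2)) *\<^sub>R Q)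
     = ((t/2) * (u * ((1+s)/2) + v * ((1-s)/2))) *\<^sub>R P + ((t/2) * (u * ((1-s)/2) + v * ((1+s)/2))) *\<^sub>R Q"
    by (simp add: scaleR_add_right)
  have r: "(u/2) *\<^sub>R E + (v/2) *\<^sub>R E' = ((u/2)*((t+D)/2) + (v/2)*((t-D)/2)) *\<^sub>R P + ((u/2)*((t-D)/2) + (v/2)*((t+D)/2)) *\<^sub>R Q"
    unfolding assms(2,3) by (simp add: scaleR_add_right scaleR_add_left algebra_simps)
  have c1: "(t/2) * (u * ((1+s)/2) + v * ((1-s)/2)) = (u/2)*((t+D)/2) + (v/2)*((t-D)/2)"
    unfolding assms(1)[symmetric] by (simp add: field_simps)
  have c2: "(t/2) * (u * ((1-s)/2) + v * ((1+s)/2)) = (u/2)*((t-D)/2) + (v/2)*((t+D)/2)"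
    unfolding assms(1)[symmetric] by (simp add: field_simps)
  show ?thesis unfolding l r c1 c2 ..
qed


lemma if_scaleR: "(if c then a else 0) *\<^sub>R (X::qop) = (if c then a *\<^sub>R X else 0)"
  by simp

lemma if_half: "((if c then 1 else 0) / 2) *\<^sub>R (X::qop) = (if c then (1/2) *\<^sub>R X else 0)"
  by simp

lemma bwd:
  assumes A: "povm n A" and J: "jointly_measurable n A n (\<lambda>i. antipodal (A i))"
  shows "projective_simulable n A"
proof -
  obtain M where Mpsd: "\<forall>a<n. \<forall>b<n. psd (M a b)" and Mtot: "(\<Sum>a<n. \<Sum>b<n. M a b) = mat 1"
    and M1: "\<forall>a<n. (\<Sum>b<n. M a b) = A a" and M2: "\<forall>b<n. (\<Sum>a<n. M a b) = antipodal (A b)"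
    using J unfolding jointly_measurable_def by blast
  define xj where "xj = (\<lambda>j::nat. j div n)"
  define yj where "yj = (\<lambda>j::nat. j mod n)"
  define E where "E = (\<lambda>j. M (xj j) (yj j))"
  define t where "t = (\<lambda>j. Re (trace (E j)))"
  define P where "P = (\<lambda>j. fst (sel (E j)))"
  define D where "D = (\<lambda>j. snd (sel (E j)))"
  define s where "s = (\<lambda>j. D j / t j)"
  define p where "p = (\<lambda>j. t j / 2)"
  define m where "m = (\<lambda>j::nat. 2::nat)"
  define B where "B = (\<lambda>j i'::nat. if i' = 0 then P j else mat 1 - P j)"
  define q :: "nat \<Rightarrow> nat \<Rightarrow> nat \<Rightarrow> real" where "q = (\<lambda>j i' i. if i' = 0
      then (if i = xj j then (1 + s j)/2 else 0) + (if i = yj j then (1 - s j)/2 else 0)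
      else (if i = xj j then (1 - s j)/2 else 0) + (if i = yj j then (1 + s j)/2 else 0))"
  have xy: "xj j < n" "yj j < n" if "j < n*n" for j
  proof -
    have n0: "n > 0" using that by (cases n) auto
    show "xj j < n" using that n0 unfolding xj_def by (simp add: div_less_iff_less_mult mult.commute)
    show "yj j < n" using n0 unfolding yj_def by simp
  qed
  have Epsd: "psd (E j)" if "j < n*n" for j using Mpsd xy[OF that] unfolding E_def by auto
  have dj: "dec (E j) (P j) (D j)" if "j < n*n" for j unfolding P_def D_def by (rule sel_dec[OF Epsd[OF that]])
  have tD: "0 \<le> D j" "D j \<le> t j" if "j < n*n" for j using dj[OF that] unfolding dec_def t_def by auto
  have s01: "0 \<le> s j" "s j \<le> 1" if "j < n*n" for j
    using tD[OF that] unfolding s_def by (auto simp: divide_le_eq_1)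
  have ts: "t j * s j = D j" if "j < n*n" for j
    using tD[OF that] unfolding s_def by auto
  have p0: "\<forall>j<n*n. p j \<ge> 0" using tD unfolding p_def by force
  have p1: "(\<Sum>j<n*n. p j) = 1"
  proof -
    have "(\<Sum>j<n*n. p j) = (\<Sum>x<n. \<Sum>y<n. Re (trace (M x y)) / 2)"
      unfolding p_def t_def E_def xj_def yj_def by (rule sum_pairs)
    also have "\<dots> = Re (trace (\<Sum>x<n. \<Sum>y<n. M x y)) / 2"
      by (simp add: trace_sum sum_divide_distrib)
    also have "\<dots> = 1" using Mtot trace_mat1 by simp
    finally show ?thesis .
  qed
  have Bp: "\<forall>j<n*n. projective_povm (m j) (B j)"
  proof (intro allI impI)
    fix j assume j: "j < n*n"
    have pr: "projector (P j)" "projector (mat 1 - P j)" using dj[OF j] unfolding dec_def by auto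
    have "\<forall>i<2. projector (B j i)" using pr unfolding B_def by (auto simp: less_2_cases_iff)
    moreover then have "\<forall>i<2. psd (B j i)" using proj_psd unfolding projector_def by blast
    moreover have "(\<Sum>i<2. B j i) = mat 1" unfolding B_def by (simp add: numeral_2_eq_2)
    ultimately show "projective_povm (m j) (B j)" unfolding projective_povm_def povm_def m_def by auto
  qed
  have qok: "\<forall>j<n*n. \<forall>i'<m j. (\<forall>i<n. q j i' i \<ge> 0) \<and> (\<Sum>i<n. q j i' i) = 1"
  proof (intro allI impI conjI)
    fix j i' i assume j: "j < n*n" and "i' < m j" "i < n"
    show "q j i' i \<ge> 0" using s01[OF j] unfolding q_def by auto
  next
    fix j i' assume j: "j < n*n" and "i' < m j"
    show "(\<Sum>i<n. q j i' i) = 1"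
    proof (cases "i' = 0")
      case True
      then have "(\<Sum>i<n. q j i' i) = (1 + s j)/2 + (1 - s j)/2" using xy[OF j] unfolding q_def by (simp add: sum.distrib)
      moreover have "(1 + s j)/2 + (1 - s j)/2 = (1::real)" "(1 - s j)/2 + (1 + s j)/2 = (1::real)" by (simp_all add: field_simps)
      ultimately show ?thesis by simp
    next
      case False
      then have "(\<Sum>i<n. q j i' i) = (1 - s j)/2 + (1 + s j)/2" using xy[OF j] unfolding q_def by (simp add: sum.distrib)
      moreover have "(1 + s j)/2 + (1 - s j)/2 = (1::real)" "(1 - s j)/2 + (1 + s j)/2 = (1::real)" by (simp_all add: field_simps)
      ultimately show ?thesis by simp
    qed
  qed
  have Ai: "\<forall>i<n. A i = (\<Sum>j<n*n. p j *\<^sub>R (\<Sum>i'<m j. q j i' i *\<^sub>R B j i'))"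
  proof (intro allI impI)
    fix i assume i: "i < n"
    define u where "u = (\<lambda>j. if i = xj j then 1 else (0::real))"
    define v where "v = (\<lambda>j. if i = yj j then 1 else (0::real))"
    have step: "p j *\<^sub>R (\<Sum>i'<m j. q j i' i *\<^sub>R B j i') = (u j / 2) *\<^sub>R E j + (v j / 2) *\<^sub>R antipodal (E j)"
      if j: "j < n*n" for j
    proof -
      have d: "E j = ((t j + D j)/2) *\<^sub>R P j + ((t j - D j)/2) *\<^sub>R (mat 1 - P j)"
        "antipodal (E j) = ((t j - D j)/2) *\<^sub>R P j + ((t j + D j)/2) *\<^sub>R (mat 1 - P j)"
        using dj[OF j] unfolding dec_def t_def by auto
      have q0: "q j 0 i = u j * ((1 + s j)/2) + v j * ((1 - s j)/2)"
        and q1: "q j 1 i = u j * ((1 - s j)/2) + v j * ((1 + s j)/2)"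
        unfolding q_def u_def v_def by auto
      have "p j *\<^sub>R (\<Sum>i'<m j. q j i' i *\<^sub>R B j i') = (t j / 2) *\<^sub>R (q j 0 i *\<^sub>R P j + q j 1 i *\<^sub>R (mat 1 - P j))"
        unfolding m_def B_def p_def by (simp add: numeral_2_eq_2)
      also have "\<dots> = (u j / 2) *\<^sub>R E j + (v j / 2) *\<^sub>R antipodal (E j)"
        unfolding q0 q1 by (rule comb[OF ts[OF j] d])
      finally show ?thesis .
    qed
    have "(\<Sum>j<n*n. p j *\<^sub>R (\<Sum>i'<m j. q j i' i *\<^sub>R B j i'))
        = (\<Sum>j<n*n. (u j / 2) *\<^sub>R E j + (v j / 2) *\<^sub>R antipodal (E j))"
      using step by (intro sum.cong) auto
    also have "\<dots> = (\<Sum>x<n. \<Sum>y<n. ((if i = x then 1 else 0) / 2) *\<^sub>R M x y + ((if i = y then 1 else 0) / 2) *\<^sub>R antipodal (M x y))"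
      unfolding u_def v_def E_def xj_def yj_def
      by (rule sum_pairs[where f = "\<lambda>x y. ((if i = x then 1 else 0) / 2) *\<^sub>R M x y + ((if i = y then 1 else 0) / 2) *\<^sub>R antipodal (M x y)"])
    also have "\<dots> = (\<Sum>x<n. \<Sum>y<n. (if i = x then (1/2) *\<^sub>R M x y else 0)) + (\<Sum>y<n. \<Sum>x<n. (if i = y then (1/2) *\<^sub>R antipodal (M x y) else 0))"
    proof -
      have "(\<Sum>x<n. \<Sum>y<n. ((if i = y then 1 else 0) / 2) *\<^sub>R antipodal (M x y)) = (\<Sum>y<n. \<Sum>x<n. ((if i = y then 1 else 0) / 2) *\<^sub>R antipodal (M x y))"
        by (rule sum.swap)
      then show ?thesis by (simp add: sum.distrib if_half del: scaleR_scaleR)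
    qed
    also have "\<dots> = (1/2) *\<^sub>R (\<Sum>y<n. M i y) + (1/2) *\<^sub>R antipodal (\<Sum>x<n. M x i)"
    proof -
      have ifs: "(\<Sum>y<n. if i = x then g x y else 0) = (if i = x then (\<Sum>y<n. g x y) else 0)" for x and g :: "nat \<Rightarrow> nat \<Rightarrow> qop"
        by simp
      have h1: "(\<Sum>x<n. \<Sum>y<n. if i = x then (1/2) *\<^sub>R M x y else 0) = (1/2) *\<^sub>R (\<Sum>y<n. M i y)"
      proof -
        have "(\<Sum>x<n. \<Sum>y<n. if i = x then (1/2) *\<^sub>R M x y else 0) = (\<Sum>x<n. if i = x then (\<Sum>y<n. (1/2) *\<^sub>R M x y) else 0)"
          by (rule sum.cong[OF refl]) simp
        also have "\<dots> = (\<Sum>y<n. (1/2) *\<^sub>R M i y)" using i by (simp add: sum.delta sum.delta')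
        finally show ?thesis by (simp add: scaleR_sum_right)
      qed
      have h2: "(\<Sum>y<n. \<Sum>x<n. if i = y then (1/2) *\<^sub>R antipodal (M x y) else 0) = (1/2) *\<^sub>R antipodal (\<Sum>x<n. M x i)"
      proof -
        have "(\<Sum>y<n. \<Sum>x<n. if i = y then (1/2) *\<^sub>R antipodal (M x y) else 0) = (\<Sum>y<n. if i = y then (\<Sum>x<n. (1/2) *\<^sub>R antipodal (M x y)) else 0)"
          by (rule sum.cong[OF refl]) simp
        also have "\<dots> = (\<Sum>x<n. (1/2) *\<^sub>R antipodal (M x i))" using i by (simp add: sum.delta sum.delta')
        finally show ?thesis by (simp add: scaleR_sum_right antipodal_sum)
      qed
      show ?thesis unfolding h1 h2 ..
    qed
    also have "\<dots> = A i" using M1 M2 i by (simp add: scaleR_add_left[symmetric])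
    finally show "A i = (\<Sum>j<n*n. p j *\<^sub>R (\<Sum>i'<m j. q j i' i *\<^sub>R B j i'))" by simp
  qed
  show ?thesis unfolding projective_simulable_def
    using p0 p1 Bp qok Ai by blast
qed


theorem theorem1:
  fixes n :: nat and A :: "nat \<Rightarrow> qop"
  assumes "povm n A"
  shows "projective_simulable n A \<longleftrightarrow>
         jointly_measurable n A n (\<lambda>i. antipodal (A i))"
  using fwd[OF assms] bwd[OF assms] by blast

end
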